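(* Let $(Z_n)$ be a branching process in random environment as in the context, and assume $z\ge1$ satisfies $\mathbb{P}(Q(0)>0,\,Q(z)>0)>0$. Then for all $k,j\in Cl(\{z\})$ the limits $\lim_n\frac1n\log\mathbb{P}_k(Z_n=j)$ exist, are finite (in $(-\infty,0]$), and all equal $\lim_n\frac1n\log\mathbb{P}_z(Z_n=z)$. Moreover, for every sequence $(k_n)$ of integers with $k_n\ge z$ for $n$ large enough and $k_n/n\to0$, $$\lim_n\tfrac1n\log\mathbb{P}_z(Z_n=z)=\lim_n\tfrac1n\log\mathbb{P}_z(1\le Z_n\le k_n).$$
   Context: $\Delta$ is the set of probability measures on $\mathbb{N}_0$, $q(k)=q(\{k\})$. $Q$ is a random element of $\Delta$, $Q_1,Q_2,\dots$ i.i.d. copies (the environment). $Z_0$ is independent of the environment and, given the environment and $Z_0,\dots,Z_{n-1}$, $Z_n$ has law $Q_n^{*Z_{n-1}}$. $\mathbb{P}_k=\mathbb{P}(\cdot\mid Z_0=k)$. $Cl(\{z\})=\{k\ge1:\exists n\ge0,\ \mathbb{P}_z(Z_n=k)>0\}$. *)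

theory Defs
  imports "HOL-Probability.Probability"
begin

fun conv_pow :: "nat pmf \<Rightarrow> nat \<Rightarrow> nat pmf" where
  "conv_pow q 0 = return_pmf 0"
| "conv_pow q (Suc k) = bind_pmf q (\<lambda>a. map_pmf (\<lambda>b. a + b) (conv_pow q k))"

text \<open>Quenched law of Z_n given Z_0 = k and environment (Q_1,...,Q_n) = qs:
  Z_i has law Q_i^{*Z_{i-1}}.\<close>
fun qlaw :: "nat pmf list \<Rightarrow> nat \<Rightarrow> nat pmf" where
  "qlaw [] k = return_pmf k"
| "qlaw (q # qs) k = bind_pmf (conv_pow q k) (qlaw qs)"

text \<open>Annealed probability P_k(Z_n \<in> A): the environment Q_1,Q_2,... is an i.i.d.
  sequence with law mu (the law of Q), i.e. distributed as stream_space mu.\<close>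
definition bpre_prob :: "nat pmf measure \<Rightarrow> nat \<Rightarrow> nat \<Rightarrow> nat set \<Rightarrow> real" where
  "bpre_prob \<mu> k n A = (\<integral>\<omega>. measure_pmf.prob (qlaw (stake n \<omega>) k) A \<partial>(stream_space \<mu>))"

definition Cl :: "nat pmf measure \<Rightarrow> nat \<Rightarrow> nat set" where
  "Cl \<mu> z = {k. 1 \<le> k \<and> (\<exists>n. bpre_prob \<mu> z n {k} > 0)}"

end

theory Submission
  imports Defs
begin

lemma shift_gen:
  fixes a :: "nat \<Rightarrow> real"
  assumes "(\<lambda>n. a n / real n) \<longlonglongrightarrow> L"
  shows "(\<lambda>n. (a (n + s) + C) / real (n + t)) \<longlonglongrightarrow> L"
proof -
  have 1: "(\<lambda>n. a (n + s) / real (n + s)) \<longlonglongrightarrow> L"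
    using LIMSEQ_ignore_initial_segment[OF assms, of s] by simp
  have co: "(\<lambda>n. D / real (n + t)) \<longlonglongrightarrow> 0" for D :: real
    using LIMSEQ_ignore_initial_segment[OF lim_const_over_n[of D], of t] by simp
  have 2: "(\<lambda>n. real (n + s) / real (n + t)) \<longlonglongrightarrow> 1"
  proof -
    have "(\<lambda>n. 1 + (real s - real t) / real (n + t)) \<longlonglongrightarrow> 1 + 0"
      by (intro tendsto_intros co)
    moreover have "eventually (\<lambda>n. 1 + (real s - real t) / real (n + t) = real (n + s) / real (n + t)) sequentially"
      using eventually_gt_at_top[of 0]
    proof eventually_elim
      case (elim n)
      then have "real (n + t) \<noteq> 0" by simp
      then show ?case by (simp add: field_simps)
    qed
    ultimately show ?thesis by (simp add: tendsto_cong)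
  qed
  have 3: "(\<lambda>n. C / real (n + t)) \<longlonglongrightarrow> 0" by (rule co)
  have "(\<lambda>n. a (n + s) / real (n + s) * (real (n + s) / real (n + t)) + C / real (n + t)) \<longlonglongrightarrow> L * 1 + 0"
    by (intro tendsto_intros 1 2 3)
  moreover have "eventually (\<lambda>n. a (n + s) / real (n + s) * (real (n + s) / real (n + t)) + C / real (n + t)
     = (a (n + s) + C) / real (n + t)) sequentially"
    using eventually_gt_at_top[of 0] proof eventually_elim
    case (elim n)
    have g: "x / A * (A / B) + C / B = (x + C) / B" if "A \<noteq> 0" for x A B C :: real
      using that by (simp add: add_divide_distrib)
    from elim have "real (n + s) \<noteq> 0" by auto
    from g[OF this] show ?case .
  qed
  ultimately show ?thesis by (simp add: tendsto_cong)
qed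

locale ana =
  fixes p :: "nat \<Rightarrow> nat \<Rightarrow> nat \<Rightarrow> real" and z :: nat and \<eta> \<delta> :: real
  assumes nn: "\<And>k n j. 0 \<le> p k n j" and le1: "\<And>k n j. p k n j \<le> 1"
    and mult: "\<And>k n i m j. p k n i * p i m j \<le> p k (n + m) j"
    and one: "\<And>j. j \<ge> 1 \<Longrightarrow> \<eta> * \<delta> ^ j \<le> p j 1 z"
    and p0: "p z 0 z = 1"
    and \<eta>: "\<eta> > 0" and \<delta>: "\<delta> > 0" "\<delta> \<le> 1" and z: "z \<ge> 1"
begin

definition b where "b = \<eta> * \<delta> ^ z"
definition a where "a n = ln (p z n z)"

lemma b_pos: "b > 0" unfolding b_def using \<eta> \<delta> by simp
lemma b_le1: "b \<le> 1" unfolding b_def using one[OF z] le1[of z 1 z] by simp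

lemma pow_le: "b ^ n \<le> p z n z"
proof (induction n)
  case 0 then show ?case by (simp add: p0)
next
  case (Suc n)
  have "b ^ Suc n = b ^ n * b" by simp
  also have "\<dots> \<le> p z n z * p z 1 z"
    using Suc one[OF z] b_pos nn[of z n z] unfolding b_def by (intro mult_mono) auto
  also have "\<dots> \<le> p z (n + 1) z" by (rule mult)
  finally show ?case by simp
qed

lemma pzz_pos: "p z n z > 0"
  using pow_le[of n] b_pos by (meson less_le_trans zero_less_power)

lemma a_le0: "a n \<le> 0" unfolding a_def using pzz_pos le1 by simp

lemma a_ge: "real n * ln b \<le> a n"
proof -
  have "ln (b ^ n) \<le> ln (p z n z)" using pow_le b_pos pzz_pos by simp
  then show ?thesis unfolding a_def using b_pos by (simp add: ln_realpow)
qed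

lemma a_super: "a n + a m \<le> a (n + m)"
proof -
  have "ln (p z n z * p z m z) \<le> ln (p z (n + m) z)"
    using mult[of z n z m z] pzz_pos by (simp add: mult_pos_pos)
  then show ?thesis unfolding a_def using pzz_pos[of n] pzz_pos[of m] by (simp add: ln_mult)
qed

lemma a_qm: "real q * a m + a r \<le> a (q * m + r)"
proof (induction q)
  case 0 then show ?case by simp
next
  case (Suc q)
  have "real (Suc q) * a m + a r = a m + (real q * a m + a r)" by (simp add: algebra_simps)
  also have "\<dots> \<le> a m + a (q * m + r)" using Suc by simp
  also have "\<dots> \<le> a (m + (q * m + r))" by (rule a_super)
  finally show ?case by (simp add: add.assoc)
qed

definition L where "L = (SUP n\<in>{1..}. a n / real n)"

lemma bdd: "bdd_above ((\<lambda>n. a n / real n) ` {1..})"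
  by (rule bdd_aboveI[of _ 0]) (auto intro: divide_nonpos_nonneg a_le0)

lemma le_L: "n \<ge> 1 \<Longrightarrow> a n / real n \<le> L"
  unfolding L_def by (rule cSUP_upper[OF _ bdd]) auto

lemma L_le0: "L \<le> 0"
  unfolding L_def by (rule cSUP_least) (auto intro: divide_nonpos_nonneg a_le0)

lemma fekete: "(\<lambda>n. a n / real n) \<longlonglongrightarrow> L"
proof (rule LIMSEQ_I)
  fix r :: real assume r: "0 < r"
  have "L - r / 2 < L" using r by simp
  then obtain m where m: "m \<ge> 1" "L - r / 2 < a m / real m"
    using less_cSUP_iff[OF _ bdd, of "L - r/2"] unfolding L_def[symmetric] by auto
  define c where "c = ln b"
  have c: "c \<le> 0" unfolding c_def using b_pos b_le1 by simp
  define N where "N = nat \<lceil>2 * real m * \<bar>c\<bar> / r\<rceil> + 1"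
  have "norm (a n / real n - L) < r" if n: "n \<ge> N" for n
  proof -
    have n1: "n \<ge> 1" using n unfolding N_def by simp
    have nr: "2 * real m * \<bar>c\<bar> / r \<le> real n"
    proof -
      define x where "x = 2 * real m * \<bar>c\<bar> / r"
      have 1: "x \<le> real (nat \<lceil>x\<rceil>)" by (rule real_nat_ceiling_ge)
      have "nat \<lceil>x\<rceil> \<le> n" using n unfolding N_def x_def by linarith
      then have 2: "real (nat \<lceil>x\<rceil>) \<le> real n" by (rule of_nat_mono)
      from 1 2 show ?thesis unfolding x_def by linarith
    qed
    define q where "q = n div m"
    define rr where "rr = n mod m"
    have ndec: "n = q * m + rr" unfolding q_def rr_def by simp
    have rrm: "rr \<le> m" unfolding rr_def using m(1) by (simp add: less_imp_le)
    have qm: "real q * real m \<le> real n" using ndec by (metis le_add1 of_nat_le_iff of_nat_mult)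
    have am: "a m / real m \<le> 0" by (intro divide_nonpos_nonneg a_le0) simp
    have "real n * (a m / real m) + real m * c \<le> real q * a m + a rr"
    proof -
      have "real n * (a m / real m) \<le> (real q * real m) * (a m / real m)"
        using qm am by (intro mult_right_mono_neg) auto
      also have "\<dots> = real q * a m" using m(1) by simp
      finally have 1: "real n * (a m / real m) \<le> real q * a m" .
      have "real m * c \<le> real rr * c" using rrm c by (intro mult_right_mono_neg) auto
      also have "\<dots> \<le> a rr" using a_ge[of rr] unfolding c_def .
      finally show ?thesis using 1 by linarith
    qed
    also have "\<dots> \<le> a n" using a_qm[of q m rr] ndec by simp
    finally have low: "real n * (a m / real m) + real m * c \<le> a n" .
    have "- (r / 2) * real n \<le> real m * c"
    proof -
      have "2 * real m * \<bar>c\<bar> \<le> real n * r" using nr r by (simp add: field_simps)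
      then have "2 * real m * (- c) \<le> real n * r" using c by simp
      then show ?thesis by (simp add: algebra_simps)
    qed
    with low have "real n * (a m / real m) - (r / 2) * real n \<le> a n" by linarith
    then have "a m / real m - r / 2 \<le> a n / real n" using n1 by (simp add: field_simps)
    with m have "L - r < a n / real n" by linarith
    moreover have "a n / real n \<le> L" using le_L n1 by simp
    ultimately show ?thesis using r by simp
  qed
  then show "\<exists>no. \<forall>n\<ge>no. norm (a n / real n - L) < r" by blast
qed



lemma pz_pos1: "j \<ge> 1 \<Longrightarrow> p j 1 z > 0"
  using one[of j] \<eta> \<delta> by (meson less_le_trans mult_pos_pos zero_less_power)

lemma pair:
  assumes k: "k \<ge> 1" and j: "j \<ge> 1" and n0: "p z n0 k > 0" and n1: "p z n1 j > 0"
  shows "eventually (\<lambda>n. p k n j > 0) sequentially \<and> (\<lambda>n. ln (p k n j) / real n) \<longlonglongrightarrow> L"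
proof -
  define C1 where "C1 = p k 1 z * p z n1 j"
  define C2 where "C2 = p z n0 k * p j 1 z"
  define d where "d = 1 + n1"
  have C1: "C1 > 0" unfolding C1_def using pz_pos1[OF k] n1 by simp
  have C2: "C2 > 0" unfolding C2_def using pz_pos1[OF j] n0 by simp
  have low: "C1 * p z n z \<le> p k (n + d) j" for n
  proof -
    have "C1 * p z n z = (p k 1 z * p z n z) * p z n1 j" unfolding C1_def by simp
    also have "\<dots> \<le> p k (1 + n) z * p z n1 j" by (intro mult_right_mono mult nn)
    also have "\<dots> \<le> p k (1 + n + n1) j" by (rule mult)
    finally show ?thesis unfolding d_def by (simp add: add_ac)
  qed
  have pos: "p k (n + d) j > 0" for n
    using low[of n] C1 pzz_pos[of n] by (meson less_le_trans mult_pos_pos)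
  have up: "C2 * p k (n + d) j \<le> p z (n + (d + n0 + 1)) z" for n
  proof -
    have "C2 * p k (n + d) j = (p z n0 k * p k (n + d) j) * p j 1 z" unfolding C2_def by simp
    also have "\<dots> \<le> p z (n0 + (n + d)) j * p j 1 z" by (intro mult_right_mono mult nn)
    also have "\<dots> \<le> p z (n0 + (n + d) + 1) z" by (rule mult)
    finally show ?thesis by (simp add: add_ac)
  qed
  have lowln: "a n + ln C1 \<le> ln (p k (n + d) j)" for n
  proof -
    have "ln (C1 * p z n z) \<le> ln (p k (n + d) j)" using low[of n] C1 pzz_pos[of n] pos[of n] by simp
    then show ?thesis unfolding a_def using C1 pzz_pos[of n] by (simp add: ln_mult)
  qed
  have upln: "ln (p k (n + d) j) \<le> a (n + (d + n0 + 1)) + - ln C2" for n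
  proof -
    have "ln (C2 * p k (n + d) j) \<le> a (n + (d + n0 + 1))" unfolding a_def
      using up[of n] C2 pzz_pos pos[of n] by simp
    then show ?thesis using C2 pos[of n] by (simp add: ln_mult)
  qed
  have dpos: "real (n + d) > 0" for n unfolding d_def by simp
  have "(\<lambda>n. ln (p k (n + d) j) / real (n + d)) \<longlonglongrightarrow> L"
  proof (rule tendsto_sandwich)
    show "eventually (\<lambda>n. (a (n + 0) + ln C1) / real (n + d) \<le> ln (p k (n + d) j) / real (n + d)) sequentially"
      using lowln dpos by (intro always_eventually allI divide_right_mono) (auto intro: less_imp_le)
    show "eventually (\<lambda>n. ln (p k (n + d) j) / real (n + d) \<le> (a (n + (d + n0 + 1)) + - ln C2) / real (n + d)) sequentially"
      using upln dpos by (intro always_eventually allI divide_right_mono) (auto intro: less_imp_le)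
    show "(\<lambda>n. (a (n + 0) + ln C1) / real (n + d)) \<longlonglongrightarrow> L" by (rule shift_gen[OF fekete])
    show "(\<lambda>n. (a (n + (d + n0 + 1)) + - ln C2) / real (n + d)) \<longlonglongrightarrow> L" by (rule shift_gen[OF fekete])
  qed
  then have "(\<lambda>n. ln (p k n j) / real n) \<longlonglongrightarrow> L" by (rule LIMSEQ_offset)
  moreover have "eventually (\<lambda>n. p k n j > 0) sequentially"
    unfolding eventually_sequentially
  proof (intro exI allI impI)
    fix n assume "d \<le> n"
    then have "n = (n - d) + d" by simp
    then show "p k n j > 0" using pos[of "n - d"] by metis
  qed
  ultimately show ?thesis by blast
qed

lemma knpart:
  fixes kn :: "nat \<Rightarrow> int"
  assumes ev: "eventually (\<lambda>n. kn n \<ge> int z) sequentially"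
    and lim: "(\<lambda>n. real_of_int (kn n) / real n) \<longlonglongrightarrow> 0"
  shows "eventually (\<lambda>n. (\<Sum>m\<in>{m. 1 \<le> m \<and> int m \<le> kn n}. p z n m) > 0) sequentially \<and>
    (\<lambda>n. ln (\<Sum>m\<in>{m. 1 \<le> m \<and> int m \<le> kn n}. p z n m) / real n) \<longlonglongrightarrow> L"
proof -
  define S where "S n = {m. 1 \<le> m \<and> int m \<le> kn n}" for n
  define pA where "pA n = (\<Sum>m\<in>S n. p z n m)" for n
  define K where "K n = nat (kn n)" for n
  have Seq: "S n = {1..K n}" if "kn n \<ge> int z" for n
    unfolding S_def K_def using that z by auto
  have lowA: "p z n z \<le> pA n" if "kn n \<ge> int z" for n
    unfolding pA_def Seq[OF that] using that z nn by (intro member_le_sum) (auto simp: K_def)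
  have posA: "pA n > 0" if "kn n \<ge> int z" for n
    using lowA[OF that] pzz_pos[of n] by linarith
  have K1: "K n \<ge> 1" if "kn n \<ge> int z" for n using that z unfolding K_def by linarith
  have upA: "pA n \<le> real (K n) * (p z (n + 1) z / (\<eta> * \<delta> ^ K n))" if kz: "kn n \<ge> int z" for n
  proof -
    have ed: "\<eta> * \<delta> ^ K n > 0" using \<eta> \<delta> by simp
    have "p z n m \<le> p z (n + 1) z / (\<eta> * \<delta> ^ K n)" if m: "m \<in> S n" for m
    proof -
      have m1: "1 \<le> m" "m \<le> K n" using m Seq[OF kz] by auto
      have "p z n m * (\<eta> * \<delta> ^ K n) \<le> p z n m * p m 1 z"
      proof (intro mult_left_mono nn)
        have "\<eta> * \<delta> ^ K n \<le> \<eta> * \<delta> ^ m"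
          using \<eta> \<delta> m1 by (intro mult_left_mono power_decreasing) auto
        also have "\<dots> \<le> p m 1 z" by (rule one[OF m1(1)])
        finally show "\<eta> * \<delta> ^ K n \<le> p m 1 z" .
      qed
      also have "\<dots> \<le> p z (n + 1) z" by (rule mult)
      finally show ?thesis using ed by (simp add: pos_le_divide_eq)
    qed
    then have "pA n \<le> real (card (S n)) * (p z (n + 1) z / (\<eta> * \<delta> ^ K n))"
      unfolding pA_def by (rule sum_bounded_above)
    then show ?thesis using Seq[OF kz] by simp
  qed
  have lnup: "ln (pA n) \<le> ln (real (K n)) + a (n + 1) - ln \<eta> - real (K n) * ln \<delta>" if kz: "kn n \<ge> int z" for n
  proof -
    have "ln (pA n) \<le> ln (real (K n) * (p z (n + 1) z / (\<eta> * \<delta> ^ K n)))"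
      using upA[OF kz] posA[OF kz] by simp
    also have "\<dots> = ln (real (K n)) + a (n + 1) - ln \<eta> - real (K n) * ln \<delta>"
      unfolding a_def using K1[OF kz] pzz_pos[of "n+1"] \<eta> \<delta>
      by (simp add: ln_mult ln_div ln_realpow)
    finally show ?thesis .
  qed
  have lnlow: "a n \<le> ln (pA n)" if kz: "kn n \<ge> int z" for n
    unfolding a_def using lowA[OF kz] pzz_pos[of n] by simp
  have Klim: "(\<lambda>n. real (K n) / real n) \<longlonglongrightarrow> 0"
  proof -
    have "eventually (\<lambda>n. real_of_int (kn n) / real n = real (K n) / real n) sequentially"
      using ev by eventually_elim (use z in \<open>auto simp: K_def\<close>)
    with lim show ?thesis by (rule Lim_transform_eventually)
  qed
  have lnKlim: "(\<lambda>n. ln (real (K n)) / real n) \<longlonglongrightarrow> 0"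
  proof (rule tendsto_sandwich[OF _ _ tendsto_const Klim])
    show "eventually (\<lambda>n. 0 \<le> ln (real (K n)) / real n) sequentially"
      using ev by eventually_elim (use K1 in \<open>auto\<close>)
    show "eventually (\<lambda>n. ln (real (K n)) / real n \<le> real (K n) / real n) sequentially"
      using ev
    proof eventually_elim
      case (elim n)
      have "ln (real (K n)) \<le> real (K n)"
        using K1[OF elim] ln_le_minus_one[of "real (K n)"] by simp
      then show ?case by (simp add: divide_right_mono)
    qed
  qed
  have Ulim: "(\<lambda>n. (a (n + 1) + - ln \<eta>) / real (n + 0) + ln (real (K n)) / real n - ln \<delta> * (real (K n) / real n))
      \<longlonglongrightarrow> L + 0 - ln \<delta> * 0"
    by (intro tendsto_intros shift_gen[OF fekete] lnKlim Klim)
  have main: "(\<lambda>n. ln (pA n) / real n) \<longlonglongrightarrow> L"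
  proof (rule tendsto_sandwich[OF _ _ fekete])
    show "eventually (\<lambda>n. a n / real n \<le> ln (pA n) / real n) sequentially"
      using ev by eventually_elim (use lnlow in \<open>auto intro: divide_right_mono\<close>)
    show "eventually (\<lambda>n. ln (pA n) / real n \<le> (a (n + 1) + - ln \<eta>) / real (n + 0) + ln (real (K n)) / real n - ln \<delta> * (real (K n) / real n)) sequentially"
      using ev
    proof eventually_elim
      case (elim n)
      have "ln (pA n) / real n \<le> (ln (real (K n)) + a (n + 1) - ln \<eta> - real (K n) * ln \<delta>) / real n"
        using lnup[OF elim] by (simp add: divide_right_mono)
      also have "\<dots> = (a (n + 1) + - ln \<eta>) / real (n + 0) + ln (real (K n)) / real n - ln \<delta> * (real (K n) / real n)"
        by (simp add: diff_divide_distrib add_divide_distrib)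
      finally show ?case .
    qed
    show "(\<lambda>n. (a (n + 1) + - ln \<eta>) / real (n + 0) + ln (real (K n)) / real n - ln \<delta> * (real (K n) / real n)) \<longlonglongrightarrow> L"
      using Ulim by simp
  qed
  have "eventually (\<lambda>n. pA n > 0) sequentially" using ev by eventually_elim (rule posA)
  with main show ?thesis unfolding pA_def S_def by blast
qed

lemma main_ana:
  shows "L \<le> 0 \<and>
    (\<forall>k j. 1 \<le> k \<longrightarrow> 1 \<le> j \<longrightarrow> (\<exists>n. p z n k > 0) \<longrightarrow> (\<exists>n. p z n j > 0) \<longrightarrow>
       eventually (\<lambda>n. p k n j > 0) sequentially \<and> (\<lambda>n. ln (p k n j) / real n) \<longlonglongrightarrow> L) \<and>
    (\<lambda>n. ln (p z n z) / real n) \<longlonglongrightarrow> L \<and>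
    (\<forall>kn :: nat \<Rightarrow> int. (eventually (\<lambda>n. kn n \<ge> int z) sequentially \<and>
         (\<lambda>n. real_of_int (kn n) / real n) \<longlonglongrightarrow> 0) \<longrightarrow>
       eventually (\<lambda>n. (\<Sum>m\<in>{m. 1 \<le> m \<and> int m \<le> kn n}. p z n m) > 0) sequentially \<and>
       (\<lambda>n. ln (\<Sum>m\<in>{m. 1 \<le> m \<and> int m \<le> kn n}. p z n m) / real n) \<longlonglongrightarrow> L)"
  using L_le0 pair fekete knpart unfolding a_def by blast

end


lemma pmf_conv_pow_Suc:
  "pmf (conv_pow q (Suc k)) m = (\<Sum>a\<le>m. pmf q a * pmf (conv_pow q k) (m - a))"
proof -
  have e: "pmf (map_pmf (\<lambda>b. a + b) p) m = (if a \<le> m then pmf p (m - a) else 0)" for a and p :: "nat pmf"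
  proof (cases "a \<le> m")
    case True
    have "pmf (map_pmf (\<lambda>b. a + b) p) (a + (m - a)) = pmf p (m - a)"
      by (rule pmf_map_inj') (auto simp: inj_def)
    with True show ?thesis by simp
  next
    case False
    then show ?thesis by (auto intro!: pmf_map_outside)
  qed
  have "ennreal (pmf (conv_pow q (Suc k)) m) =
      (\<integral>\<^sup>+a. ennreal (pmf q a) * ennreal (if a \<le> m then pmf (conv_pow q k) (m - a) else 0) \<partial>count_space UNIV)"
    by (simp add: ennreal_pmf_bind nn_integral_measure_pmf e)
  also have "\<dots> = (\<integral>\<^sup>+a. ennreal (pmf q a * pmf (conv_pow q k) (m - a)) * indicator {..m} a \<partial>count_space UNIV)"
    by (intro nn_integral_cong) (auto simp: ennreal_mult)
  also have "\<dots> = (\<integral>\<^sup>+a. ennreal (pmf q a * pmf (conv_pow q k) (m - a)) \<partial>count_space {..m})"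
    by (simp add: nn_integral_count_space_indicator)
  also have "\<dots> = (\<Sum>a\<le>m. ennreal (pmf q a * pmf (conv_pow q k) (m - a)))"
    by (simp add: nn_integral_count_space_finite)
  also have "\<dots> = ennreal (\<Sum>a\<le>m. pmf q a * pmf (conv_pow q k) (m - a))"
    by (rule sum_ennreal) simp
  finally show ?thesis by (simp add: sum_nonneg)
qed

lemma ennreal_pmf_qlaw_Cons:
  "ennreal (pmf (qlaw (q # qs) k) j) = (\<Sum>m. ennreal (pmf (conv_pow q k) m) * ennreal (pmf (qlaw qs m) j))"
  by (simp add: ennreal_pmf_bind nn_integral_measure_pmf nn_integral_count_space_nat)

locale bpre = fixes \<mu> :: "nat pmf measure"
  assumes ps: "prob_space \<mu>" and meas: "\<And>k. (\<lambda>q. pmf q k) \<in> borel_measurable \<mu>"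
begin

interpretation prob_space \<mu> by (rule ps)

lemma meas_conv_pow: "(\<lambda>q. pmf (conv_pow q k) m) \<in> borel_measurable \<mu>"
proof (induction k arbitrary: m)
  case 0
  then show ?case by simp
next
  case (Suc k)
  have [measurable]: "\<And>a. (\<lambda>q. pmf q a) \<in> borel_measurable \<mu>" by (rule meas)
  note Suc[measurable]
  show ?case unfolding pmf_conv_pow_Suc by measurable
qed

lemma meas_G_enn: "(\<lambda>\<omega>. ennreal (pmf (qlaw (stake n \<omega>) k) j)) \<in> borel_measurable (stream_space \<mu>)"
proof (induction n arbitrary: k j)
  case 0
  then show ?case by simp
next
  case (Suc n)
  have [measurable]: "\<And>m. (\<lambda>q. pmf (conv_pow q k) m) \<in> borel_measurable \<mu>" by (rule meas_conv_pow)
  note Suc[measurable]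
  show ?case by (simp only: stake.simps ennreal_pmf_qlaw_Cons) measurable
qed

lemma meas_G: "(\<lambda>\<omega>. pmf (qlaw (stake n \<omega>) k) j) \<in> borel_measurable (stream_space \<mu>)"
proof -
  have "(\<lambda>\<omega>. enn2real (ennreal (pmf (qlaw (stake n \<omega>) k) j))) \<in> borel_measurable (stream_space \<mu>)"
    using meas_G_enn by measurable
  then show ?thesis by simp
qed

lemma split_stream:
  assumes Fm: "F \<in> borel_measurable (stream_space \<mu>)" and Gm: "G \<in> borel_measurable (stream_space \<mu>)"
    and dep: "\<And>\<omega> \<omega>'. stake n \<omega> = stake n \<omega>' \<Longrightarrow> F \<omega> = F \<omega>'"
  shows "(\<integral>\<^sup>+\<omega>. F \<omega> * G (sdrop n \<omega>) \<partial>stream_space \<mu>) =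
         (\<integral>\<^sup>+\<omega>. F \<omega> \<partial>stream_space \<mu>) * (\<integral>\<^sup>+\<omega>. G \<omega> \<partial>stream_space \<mu>)"
  using Fm dep
proof (induction n arbitrary: F)
  case 0
  have "F \<omega> = F \<omega>'" for \<omega> \<omega>' using 0(2)[of \<omega> \<omega>'] by simp
  then obtain c where c: "\<And>\<omega>. F \<omega> = c" by auto
  show ?case
    by (simp add: c nn_integral_cmult Gm prob_space.emeasure_space_1[OF prob_space_stream_space])
next
  case (Suc n)
  note [measurable] = Suc(2) Gm
  have Fx: "(\<lambda>X. F (x ## X)) \<in> borel_measurable (stream_space \<mu>)" if "x \<in> space \<mu>" for x
    using that by measurable
  have "(\<integral>\<^sup>+\<omega>. F \<omega> * G (sdrop (Suc n) \<omega>) \<partial>stream_space \<mu>)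
     = (\<integral>\<^sup>+x. (\<integral>\<^sup>+X. F (x ## X) * G (sdrop n X) \<partial>stream_space \<mu>) \<partial>\<mu>)"
    apply (subst nn_integral_stream_space)
    subgoal by (rule borel_measurable_times_ennreal[OF Suc(2) measurable_compose[OF measurable_sdrop Gm]])
    by simp
  also have "\<dots> = (\<integral>\<^sup>+x. (\<integral>\<^sup>+X. F (x ## X) \<partial>stream_space \<mu>) * (\<integral>\<^sup>+\<omega>. G \<omega> \<partial>stream_space \<mu>) \<partial>\<mu>)"
  proof (rule nn_integral_cong)
    fix x assume x: "x \<in> space \<mu>"
    show "(\<integral>\<^sup>+X. F (x ## X) * G (sdrop n X) \<partial>stream_space \<mu>) =
        (\<integral>\<^sup>+X. F (x ## X) \<partial>stream_space \<mu>) * (\<integral>\<^sup>+\<omega>. G \<omega> \<partial>stream_space \<mu>)"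
      by (rule Suc(1)[OF Fx[OF x]]) (rule Suc(3), simp)
  qed
  also have "\<dots> = (\<integral>\<^sup>+x. (\<integral>\<^sup>+X. F (x ## X) \<partial>stream_space \<mu>) \<partial>\<mu>) * (\<integral>\<^sup>+\<omega>. G \<omega> \<partial>stream_space \<mu>)"
  proof (rule nn_integral_multc)
    interpret S: prob_space "stream_space \<mu>" by (rule prob_space_stream_space)
    have "(\<lambda>p. fst p ## snd p) \<in> measurable (\<mu> \<Otimes>\<^sub>M stream_space \<mu>) (stream_space \<mu>)"
      by measurable
    then have "(\<lambda>p. F (fst p ## snd p)) \<in> borel_measurable (\<mu> \<Otimes>\<^sub>M stream_space \<mu>)"
      by (rule measurable_compose[OF _ Suc(2)])
    then have "(\<lambda>(x, X). F (x ## X)) \<in> borel_measurable (\<mu> \<Otimes>\<^sub>M stream_space \<mu>)"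
      by (simp add: case_prod_beta')
    then show "(\<lambda>x. \<integral>\<^sup>+X. F (x ## X) \<partial>stream_space \<mu>) \<in> borel_measurable \<mu>"
      by (rule S.borel_measurable_nn_integral)
  qed
  also have "(\<integral>\<^sup>+x. (\<integral>\<^sup>+X. F (x ## X) \<partial>stream_space \<mu>) \<partial>\<mu>) = (\<integral>\<^sup>+\<omega>. F \<omega> \<partial>stream_space \<mu>)"
    by (rule nn_integral_stream_space[symmetric, OF Suc(2)])
  finally show ?case .
qed

definition Pe :: "nat \<Rightarrow> nat \<Rightarrow> nat \<Rightarrow> ennreal" where
  "Pe k n j = (\<integral>\<^sup>+\<omega>. ennreal (pmf (qlaw (stake n \<omega>) k) j) \<partial>stream_space \<mu>)"

lemma Pe_le1: "Pe k n j \<le> 1"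
proof -
  interpret S: prob_space "stream_space \<mu>" by (rule prob_space_stream_space)
  have "Pe k n j \<le> (\<integral>\<^sup>+\<omega>. 1 \<partial>stream_space \<mu>)"
    unfolding Pe_def by (intro nn_integral_mono) (simp add: pmf_le_1)
  also have "\<dots> = 1" by (simp add: S.emeasure_space_1)
  finally show ?thesis .
qed

lemma P_eq: "bpre_prob \<mu> k n {j} = enn2real (Pe k n j)"
  unfolding bpre_prob_def Pe_def measure_pmf_single
  by (rule integral_eq_nn_integral) (auto intro: meas_G)

lemma qlaw_Nil': "qlaw [] = return_pmf" by (rule ext) simp

lemma qlaw_append: "qlaw (xs @ ys) k = bind_pmf (qlaw xs k) (qlaw ys)"
proof (induction xs arbitrary: k)
  case Nil
  then show ?case by (simp add: bind_return_pmf)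
next
  case (Cons a xs)
  have "qlaw (xs @ ys) = (\<lambda>x. qlaw xs x \<bind> qlaw ys)" using Cons by auto
  then show ?case by (simp add: bind_assoc_pmf)
qed

lemma pmf_bind_ge: "ennreal (pmf p i) * ennreal (pmf (f i) j) \<le> ennreal (pmf (bind_pmf p f) j)"
proof -
  have "ennreal (pmf p i) * ennreal (pmf (f i) j) = (\<integral>\<^sup>+x. ennreal (pmf (f i) j) * indicator {i} x \<partial>measure_pmf p)"
    by (simp add: emeasure_pmf_single mult.commute)
  also have "\<dots> \<le> (\<integral>\<^sup>+x. ennreal (pmf (f x) j) \<partial>measure_pmf p)"
    by (intro nn_integral_mono) (auto split: split_indicator)
  finally show ?thesis by (simp add: ennreal_pmf_bind)
qed

lemma Pe_mult: "Pe k n i * Pe i m j \<le> Pe k (n + m) j"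
proof -
  have m1: "(\<lambda>\<omega>. ennreal (pmf (qlaw (stake n \<omega>) k) i)) \<in> borel_measurable (stream_space \<mu>)"
    by (rule meas_G_enn)
  have m2: "(\<lambda>\<omega>. ennreal (pmf (qlaw (stake m \<omega>) i) j)) \<in> borel_measurable (stream_space \<mu>)"
    by (rule meas_G_enn)
  have "Pe k n i * Pe i m j = (\<integral>\<^sup>+\<omega>. ennreal (pmf (qlaw (stake n \<omega>) k) i) *
      ennreal (pmf (qlaw (stake m (sdrop n \<omega>)) i) j) \<partial>stream_space \<mu>)"
    unfolding Pe_def by (rule split_stream[OF m1 m2, symmetric]) simp
  also have "\<dots> \<le> Pe k (n + m) j"
    unfolding Pe_def
  proof (intro nn_integral_mono)
    fix \<omega>
    show "ennreal (pmf (qlaw (stake n \<omega>) k) i) * ennreal (pmf (qlaw (stake m (sdrop n \<omega>)) i) j)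
       \<le> ennreal (pmf (qlaw (stake (n + m) \<omega>) k) j)"
      using pmf_bind_ge[of "qlaw (stake n \<omega>) k" i "qlaw (stake m (sdrop n \<omega>))" j]
      by (simp add: qlaw_append[symmetric])
  qed
  finally show ?thesis .
qed

lemma P_mult: "bpre_prob \<mu> k n {i} * bpre_prob \<mu> i m {j} \<le> bpre_prob \<mu> k (n + m) {j}"
  unfolding P_eq enn2real_mult[symmetric]
  by (rule enn2real_mono[OF Pe_mult]) (use Pe_le1[of k "n+m" j] in \<open>simp add: le_less_trans\<close>)

lemma P_nonneg: "0 \<le> bpre_prob \<mu> k n {j}"
  by (simp add: P_eq)

lemma pmf_conv_pow_0: "pmf (conv_pow q k) 0 = pmf q 0 ^ k"
  by (induction k) (simp_all add: pmf_conv_pow_Suc del: conv_pow.simps(2))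

lemma pmf_conv_pow_ge: "pmf q z * pmf q 0 ^ k \<le> pmf (conv_pow q (Suc k)) z"
proof -
  have "pmf q z * pmf q 0 ^ k = pmf q z * pmf (conv_pow q k) (z - z)"
    by (simp add: pmf_conv_pow_0)
  also have "\<dots> \<le> (\<Sum>a\<le>z. pmf q a * pmf (conv_pow q k) (z - a))"
    by (rule member_le_sum) auto
  finally show ?thesis by (simp only: pmf_conv_pow_Suc)
qed

lemma Pe_one: "Pe j 1 z = (\<integral>\<^sup>+q. ennreal (pmf (conv_pow q j) z) \<partial>\<mu>)"
proof -
  interpret S: prob_space "stream_space \<mu>" by (rule prob_space_stream_space)
  have mm: "(\<lambda>q. ennreal (pmf (conv_pow q j) z)) \<in> borel_measurable \<mu>"
    using meas_conv_pow by measurable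
  have "Pe j 1 z = (\<integral>\<^sup>+\<omega>. ennreal (pmf (conv_pow (shd \<omega>) j) z) \<partial>stream_space \<mu>)"
    unfolding Pe_def by (simp add: qlaw_Nil' bind_return_pmf')
  also have "\<dots> = (\<integral>\<^sup>+x. (\<integral>\<^sup>+X. ennreal (pmf (conv_pow x j) z) \<partial>stream_space \<mu>) \<partial>\<mu>)"
    apply (subst nn_integral_stream_space)
    subgoal by (rule measurable_compose[OF measurable_shd mm])
    by simp
  also have "\<dots> = (\<integral>\<^sup>+q. ennreal (pmf (conv_pow q j) z) \<partial>\<mu>)"
    by (simp add: S.emeasure_space_1)
  finally show ?thesis .
qed

lemma lower_one:
  assumes "measure \<mu> {q \<in> space \<mu>. pmf q 0 > 0 \<and> pmf q z > 0} > 0"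
  shows "\<exists>\<eta> \<delta>. \<eta> > 0 \<and> \<delta> > 0 \<and> \<delta> \<le> 1 \<and> (\<forall>j\<ge>1. \<eta> * \<delta> ^ j \<le> bpre_prob \<mu> j 1 {z})"
proof -
  have [measurable]: "\<And>a. (\<lambda>q. pmf q a) \<in> borel_measurable \<mu>" by (rule meas)
  define E where "E m = {q \<in> space \<mu>. pmf q 0 \<ge> 1 / (real m + 1) \<and> pmf q z \<ge> 1 / (real m + 1)}" for m
  have Es[measurable]: "E m \<in> sets \<mu>" for m unfolding E_def by measurable
  have U: "{q \<in> space \<mu>. pmf q 0 > 0 \<and> pmf q z > 0} = (\<Union>m. E m)"
  proof safe
    fix q assume q: "q \<in> space \<mu>" "pmf q 0 > 0" "pmf q z > 0"
    obtain m1 :: nat where m1': "1 / real (Suc m1) < pmf q 0"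
      by (rule nat_approx_posE[OF q(2)])
    then have m1: "1 / (real m1 + 1) < pmf q 0" by (simp add: add.commute)
    obtain m2 :: nat where m2': "1 / real (Suc m2) < pmf q z"
      by (rule nat_approx_posE[OF q(3)])
    then have m2: "1 / (real m2 + 1) < pmf q z" by (simp add: add.commute)
    have "1 / (real (max m1 m2) + 1) \<le> 1 / (real m1 + 1)" "1 / (real (max m1 m2) + 1) \<le> 1 / (real m2 + 1)"
      by (auto intro!: divide_left_mono)
    then have "q \<in> E (max m1 m2)" unfolding E_def using q m1 m2 by auto
    then show "q \<in> (\<Union>m. E m)" by blast
  next
    fix q m assume "q \<in> E m"
    then show "q \<in> space \<mu>" "pmf q 0 > 0" "pmf q z > 0" unfolding E_def
      by (auto intro: less_le_trans[rotated])
  qed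
  have "\<exists>m. emeasure \<mu> (E m) \<noteq> 0"
  proof (rule ccontr)
    assume "\<not> ?thesis"
    then have "emeasure \<mu> (\<Union>m. E m) = 0" by (intro emeasure_UN_eq_0) auto
    then have "measure \<mu> (\<Union>m. E m) = 0" by (simp add: measure_def)
    with assms U show False by simp
  qed
  then obtain m where m: "emeasure \<mu> (E m) \<noteq> 0" by blast
  define \<delta> where "\<delta> = 1 / (real m + 1)"
  define \<eta> where "\<eta> = measure \<mu> (E m)"
  have \<eta>: "\<eta> > 0" using m unfolding \<eta>_def
    by (simp add: emeasure_eq_measure zero_less_measure_iff)
  have \<delta>: "\<delta> > 0" "\<delta> \<le> 1" unfolding \<delta>_def by auto
  have "\<eta> * \<delta> ^ j \<le> bpre_prob \<mu> j 1 {z}" if j: "j \<ge> 1" for j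
  proof -
    obtain k where k: "j = Suc k" using j by (cases j) auto
    have "ennreal (\<eta> * \<delta> ^ j) = (\<integral>\<^sup>+q. ennreal (\<delta> ^ j) * indicator (E m) q \<partial>\<mu>)"
      using \<delta> by (simp add: nn_integral_cmult_indicator \<eta>_def emeasure_eq_measure ennreal_mult' mult.commute)
    also have "\<dots> \<le> (\<integral>\<^sup>+q. ennreal (pmf (conv_pow q j) z) \<partial>\<mu>)"
    proof (intro nn_integral_mono)
      fix q assume "q \<in> space \<mu>"
      show "ennreal (\<delta> ^ j) * indicator (E m) q \<le> ennreal (pmf (conv_pow q j) z)"
      proof (cases "q \<in> E m")
        case True
        then have a: "\<delta> \<le> pmf q 0" "\<delta> \<le> pmf q z" unfolding E_def \<delta>_def by auto
        have "\<delta> ^ j = \<delta> * \<delta> ^ k" by (simp add: k)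
        also have "\<dots> \<le> pmf q z * pmf q 0 ^ k"
          using a \<delta> by (intro mult_mono power_mono) auto
        also have "\<dots> \<le> pmf (conv_pow q j) z" unfolding k by (rule pmf_conv_pow_ge)
        finally show ?thesis using True by simp
      qed simp
    qed
    also have "\<dots> = Pe j 1 z" by (rule Pe_one[symmetric])
    finally have "ennreal (\<eta> * \<delta> ^ j) \<le> Pe j 1 z" .
    then have "enn2real (ennreal (\<eta> * \<delta> ^ j)) \<le> enn2real (Pe j 1 z)"
      by (rule enn2real_mono) (use Pe_le1[of j 1 z] in \<open>simp add: le_less_trans\<close>)
    then show ?thesis using \<eta> \<delta> by (simp add: P_eq)
  qed
  then show ?thesis using \<eta> \<delta> by blast
qed


lemma P_le1: "bpre_prob \<mu> k n {j} \<le> 1"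
  unfolding P_eq using Pe_le1[of k n j] by (simp add: enn2real_leI)

lemma P_zero: "bpre_prob \<mu> z 0 {z} = 1"
proof -
  interpret S: prob_space "stream_space \<mu>" by (rule prob_space_stream_space)
  show ?thesis unfolding bpre_prob_def by (simp add: S.prob_space)
qed

lemma P_set:
  assumes "finite A"
  shows "bpre_prob \<mu> k n A = (\<Sum>j\<in>A. bpre_prob \<mu> k n {j})"
proof -
  interpret S: prob_space "stream_space \<mu>" by (rule prob_space_stream_space)
  have int: "integrable (stream_space \<mu>) (\<lambda>\<omega>. pmf (qlaw (stake n \<omega>) k) j)" for j
    by (rule S.integrable_const_bound[where B=1]) (auto simp: pmf_le_1 meas_G)
  have "bpre_prob \<mu> k n A = (\<integral>\<omega>. (\<Sum>j\<in>A. pmf (qlaw (stake n \<omega>) k) j) \<partial>stream_space \<mu>)"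
    unfolding bpre_prob_def using assms by (simp add: measure_measure_pmf_finite)
  also have "\<dots> = (\<Sum>j\<in>A. (\<integral>\<omega>. pmf (qlaw (stake n \<omega>) k) j \<partial>stream_space \<mu>))"
    using Bochner_Integration.integral_sum[where I=A and f="\<lambda>j \<omega>. pmf (qlaw (stake n \<omega>) k) j"] int by simp
  also have "\<dots> = (\<Sum>j\<in>A. bpre_prob \<mu> k n {j})"
    unfolding bpre_prob_def by (simp add: measure_pmf_single)
  finally show ?thesis .
qed

end

theorem lemma4p1:
  fixes \<mu> :: "nat pmf measure" and z :: nat
  assumes "prob_space \<mu>"
    and "\<And>k. (\<lambda>q. pmf q k) \<in> borel_measurable \<mu>"
    and "z \<ge> 1"
    and "measure \<mu> {q \<in> space \<mu>. pmf q 0 > 0 \<and> pmf q z > 0} > 0"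
  shows "\<exists>L::real. L \<le> 0 \<and>
    (\<forall>k\<in>Cl \<mu> z. \<forall>j\<in>Cl \<mu> z.
        eventually (\<lambda>n. bpre_prob \<mu> k n {j} > 0) sequentially \<and>
        (\<lambda>n. ln (bpre_prob \<mu> k n {j}) / real n) \<longlonglongrightarrow> L) \<and>
    (\<lambda>n. ln (bpre_prob \<mu> z n {z}) / real n) \<longlonglongrightarrow> L \<and>
    (\<forall>kn :: nat \<Rightarrow> int.
        (eventually (\<lambda>n. kn n \<ge> int z) sequentially \<and>
         (\<lambda>n. real_of_int (kn n) / real n) \<longlonglongrightarrow> 0) \<longrightarrow>
        eventually (\<lambda>n. bpre_prob \<mu> z n {m. 1 \<le> m \<and> int m \<le> kn n} > 0) sequentially \<and>
        (\<lambda>n. ln (bpre_prob \<mu> z n {m. 1 \<le> m \<and> int m \<le> kn n}) / real n) \<longlonglongrightarrow> L)"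
proof -
  interpret bpre \<mu> by (rule bpre.intro[OF assms(1) assms(2)])
  obtain \<eta> \<delta> where ed: "\<eta> > 0" "\<delta> > 0" "\<delta> \<le> 1" "\<forall>j\<ge>1. \<eta> * \<delta> ^ j \<le> bpre_prob \<mu> j 1 {z}"
    using lower_one[OF assms(4)] by blast
  interpret A: ana "\<lambda>k n j. bpre_prob \<mu> k n {j}" z \<eta> \<delta>
  proof
    show "\<And>k n j. 0 \<le> bpre_prob \<mu> k n {j}" by (rule P_nonneg)
    show "\<And>k n j. bpre_prob \<mu> k n {j} \<le> 1" by (rule P_le1)
    show "\<And>k n i m j. bpre_prob \<mu> k n {i} * bpre_prob \<mu> i m {j} \<le> bpre_prob \<mu> k (n + m) {j}" by (rule P_mult)
    show "\<And>j. 1 \<le> j \<Longrightarrow> \<eta> * \<delta> ^ j \<le> bpre_prob \<mu> j 1 {z}" using ed(4) by blast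
    show "bpre_prob \<mu> z 0 {z} = 1" by (rule P_zero)
  qed (rule ed(1), rule ed(2), rule ed(3), rule assms(3))
  have fin: "finite {m. 1 \<le> m \<and> int m \<le> kn n}" for kn :: "nat \<Rightarrow> int" and n
    by (rule finite_subset[of _ "{..nat (kn n)}"]) auto
  have Pset: "bpre_prob \<mu> z n {m. 1 \<le> m \<and> int m \<le> kn n} =
      (\<Sum>m\<in>{m. 1 \<le> m \<and> int m \<le> kn n}. bpre_prob \<mu> z n {m})" for kn :: "nat \<Rightarrow> int" and n
    by (rule P_set[OF fin])
  note M = A.main_ana
  have Cl: "k \<in> Cl \<mu> z \<longleftrightarrow> 1 \<le> k \<and> (\<exists>n. bpre_prob \<mu> z n {k} > 0)" for k
    unfolding Cl_def by simp
  show ?thesis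
  proof (intro exI[of _ A.L] conjI ballI allI impI)
    show "A.L \<le> 0" using M by blast
    show "(\<lambda>n. ln (bpre_prob \<mu> z n {z}) / real n) \<longlonglongrightarrow> A.L" using M by blast
    fix k j assume k: "k \<in> Cl \<mu> z" and j: "j \<in> Cl \<mu> z"
    have "eventually (\<lambda>n. bpre_prob \<mu> k n {j} > 0) sequentially \<and> (\<lambda>n. ln (bpre_prob \<mu> k n {j}) / real n) \<longlonglongrightarrow> A.L"
      using M k j unfolding Cl by blast
    then show "eventually (\<lambda>n. bpre_prob \<mu> k n {j} > 0) sequentially"
      "(\<lambda>n. ln (bpre_prob \<mu> k n {j}) / real n) \<longlonglongrightarrow> A.L" by auto
  next
    fix kn :: "nat \<Rightarrow> int"
    assume h: "eventually (\<lambda>n. kn n \<ge> int z) sequentially \<and> (\<lambda>n. real_of_int (kn n) / real n) \<longlonglongrightarrow> 0"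
    have "eventually (\<lambda>n. (\<Sum>m\<in>{m. 1 \<le> m \<and> int m \<le> kn n}. bpre_prob \<mu> z n {m}) > 0) sequentially \<and>
       (\<lambda>n. ln (\<Sum>m\<in>{m. 1 \<le> m \<and> int m \<le> kn n}. bpre_prob \<mu> z n {m}) / real n) \<longlonglongrightarrow> A.L"
      using M h by blast
    then show "eventually (\<lambda>n. bpre_prob \<mu> z n {m. 1 \<le> m \<and> int m \<le> kn n} > 0) sequentially"
        "(\<lambda>n. ln (bpre_prob \<mu> z n {m. 1 \<le> m \<and> int m \<le> kn n}) / real n) \<longlonglongrightarrow> A.L"
      unfolding Pset by auto
  qed
qed


end
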